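(* Let $q\ge 2$ and let $$F_q(x,y)=1-e^x-e^y+\big(1-x-y-(q-2)xy+xe^{(q-2)y}+ye^{(q-2)x}\big)e^{x+y}.$$ Then, as formal power series in $x,y$, $$\sum_{m=0}^{\infty}\sum_{n=0}^{\infty}B_m^{(-n)}(q)\frac{x^m}{m!}\frac{y^n}{n!}=\frac{e^{x+y}}{1-F_q(x,y)}.$$ Moreover $F_q(x,y)=\sum_{r\ge1}\sum_{s\ge1}f_q(r,s)\frac{x^r}{r!}\frac{y^s}{s!}$ with $f_q(r,s)=1+(q-2)rs+r\big((q-1)^s-(q-2)s-1\big)+s\big((q-1)^r-(q-2)r-1\big)$.
   Context: A $q$-ary matrix has entries in $\{0,1,\ldots,q-1\}$; a $q$-ary $m\times n$ matrix is a strong lonesum matrix if no other $q$-ary $m\times n$ matrix has the same row sums and column sums. $B_m^{(-n)}(q)$ denotes the number of $q$-ary strong lonesum $m\times n$ matrices, with the convention $B_0^{(-n)}(q)=B_m^{(-0)}(q)=1$ (the empty matrix). *)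

theory Defs
  imports "HOL-Computational_Algebra.Formal_Power_Series"
begin

text \<open>An m x n matrix is represented as a function nat => nat => nat whose
entries at positions (i,j) with i < m, j < n lie in {0..q-1}, and which is 0
outside the m x n box (so that matrices correspond bijectively to such functions).\<close>

definition qary_matrices :: "nat \<Rightarrow> nat \<Rightarrow> nat \<Rightarrow> (nat \<Rightarrow> nat \<Rightarrow> nat) set" where
  "qary_matrices q m n =
     {A. (\<forall>i<m. \<forall>j<n. A i j < q) \<and> (\<forall>i j. (m \<le> i \<or> n \<le> j) \<longrightarrow> A i j = 0)}"

definition row_sum :: "nat \<Rightarrow> (nat \<Rightarrow> nat \<Rightarrow> nat) \<Rightarrow> nat \<Rightarrow> nat" where
  "row_sum n A i = (\<Sum>j<n. A i j)"

definition col_sum :: "nat \<Rightarrow> (nat \<Rightarrow> nat \<Rightarrow> nat) \<Rightarrow> nat \<Rightarrow> nat" where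
  "col_sum m A j = (\<Sum>i<m. A i j)"

definition strong_lonesum :: "nat \<Rightarrow> nat \<Rightarrow> nat \<Rightarrow> (nat \<Rightarrow> nat \<Rightarrow> nat) \<Rightarrow> bool" where
  "strong_lonesum q m n A \<longleftrightarrow>
     A \<in> qary_matrices q m n \<and>
     (\<forall>B \<in> qary_matrices q m n.
        (\<forall>i<m. row_sum n B i = row_sum n A i) \<and> (\<forall>j<n. col_sum m B j = col_sum m A j)
        \<longrightarrow> B = A)"

text \<open>B_m^{(-n)}(q): number of q-ary strong lonesum m x n matrices.
For m = 0 or n = 0 the only matrix is the empty one (the zero function), so the
value is 1, matching the convention.\<close>
definition lonesum_count :: "nat \<Rightarrow> nat \<Rightarrow> nat \<Rightarrow> nat" where
  "lonesum_count q m n = card {A. strong_lonesum q m n A}"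

text \<open>Bivariate formal power series in x, y are represented as real fps fps:
the outer variable is y, the inner variable (in the coefficient ring) is x.
So the coefficient of x^m y^n of G is (G $ n) $ m.\<close>

definition varX :: "real fps fps" where "varX = fps_const fps_X"
definition varY :: "real fps fps" where "varY = fps_X"

definition expX :: "real \<Rightarrow> real fps fps" where
  "expX c = fps_const (Abs_fps (\<lambda>m. c ^ m / fact m))"
definition expY :: "real \<Rightarrow> real fps fps" where
  "expY c = Abs_fps (\<lambda>n. fps_const (c ^ n / fact n))"

definition F_q :: "nat \<Rightarrow> real fps fps" where
  "F_q q = 1 - expX 1 - expY 1
     + (1 - varX - varY - fps_const (fps_const (real q - 2)) * varX * varY
        + varX * expY (real q - 2) + varY * expX (real q - 2)) * (expX 1 * expY 1)"

definition f_q :: "nat \<Rightarrow> nat \<Rightarrow> nat \<Rightarrow> real" where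
  "f_q q r s = 1 + (real q - 2) * r * s + r * ((real q - 1) ^ s - (real q - 2) * s - 1)
                 + s * ((real q - 1) ^ r - (real q - 2) * r - 1)"

definition lonesum_egf :: "nat \<Rightarrow> real fps fps" where
  "lonesum_egf q = Abs_fps (\<lambda>n. Abs_fps (\<lambda>m. real (lonesum_count q m n) / (fact m * fact n)))"

end

theory Submission
  imports Defs "HOL-Library.FuncSet"
begin


definition TT :: "real fps \<Rightarrow> real fps \<Rightarrow> real fps fps" where
  "TT a b = fps_const a * Abs_fps (\<lambda>n. fps_const (fps_nth b n))"

lemma TT_nth: "fps_nth (fps_nth (TT a b) n) m = fps_nth a m * fps_nth b n"
  by (simp add: TT_def)

lemma fps_const_sum': "fps_const (sum f A) = (\<Sum>x\<in>A. fps_const (f x))"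
  by (induction A rule: infinite_finite_induct) (auto simp: fps_const_add[symmetric])

definition YY :: "real fps \<Rightarrow> real fps fps" where
  "YY b = Abs_fps (\<lambda>n. fps_const (fps_nth b n))"

lemma YY_mult: "YY b * YY d = YY (b * d)"
  by (rule fps_ext) (simp add: YY_def fps_mult_nth fps_const_sum' fps_const_mult[symmetric] del: fps_const_mult)

lemma TT_YY: "TT a b = fps_const a * YY b"
  by (simp add: TT_def YY_def)

lemma TT_mult: "TT a b * TT c d = TT (a * c) (b * d)"
proof -
  have "TT a b * TT c d = (fps_const a * fps_const c) * (YY b * YY d)"
    by (simp add: TT_YY ac_simps del: fps_const_mult)
  thus ?thesis by (simp add: YY_mult TT_YY)
qed

lemma TT_one: "TT 1 1 = 1"
  by (rule fps_ext) (simp add: TT_def)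

lemma expX_TT: "expX c = TT (fps_exp c) 1"
  by (rule fps_ext) (simp add: TT_def expX_def fps_exp_def)
lemma expY_TT: "expY c = TT 1 (fps_exp c)"
  by (rule fps_ext) (simp add: TT_def expY_def)
lemma varX_TT: "varX = TT fps_X 1"
  by (rule fps_ext) (simp add: TT_def varX_def)
lemma varY_TT: "varY = TT 1 fps_X"
  by (rule fps_ext) (auto simp: TT_def varY_def fps_X_def)
lemma const_TT: "fps_const (fps_const k) = TT (fps_const k) 1"
  by (rule fps_ext) (simp add: TT_def)

lemma F_nth: "fps_nth (fps_nth (F_q q) s) r = (if 1 \<le> r \<and> 1 \<le> s then f_q q r s / (fact r * fact s) else 0)"
proof -
  define k where "k = real q - 2"
  have "F_q q = TT 1 1 - TT (fps_exp 1) 1 - TT 1 (fps_exp 1)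
     + TT (fps_exp 1) (fps_exp 1) - TT (fps_X * fps_exp 1) (fps_exp 1) - TT (fps_exp 1) (fps_X * fps_exp 1)
     - TT (fps_const k * fps_X * fps_exp 1) (fps_X * fps_exp 1)
     + TT (fps_X * fps_exp 1) (fps_exp 1 * fps_exp k) + TT (fps_exp 1 * fps_exp k) (fps_X * fps_exp 1)"
    unfolding F_q_def expX_TT expY_TT varX_TT varY_TT const_TT TT_one[symmetric] k_def
    by (simp add: TT_mult algebra_simps)
  also have "fps_exp 1 * fps_exp k = fps_exp (real q - 1)"
    by (simp add: fps_exp_add_mult[symmetric] k_def)
  finally have FF: "F_q q = TT 1 1 - TT (fps_exp 1) 1 - TT 1 (fps_exp 1)
     + TT (fps_exp 1) (fps_exp 1) - TT (fps_X * fps_exp 1) (fps_exp 1) - TT (fps_exp 1) (fps_X * fps_exp 1)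
     - TT (fps_const k * (fps_X * fps_exp 1)) (fps_X * fps_exp 1)
     + TT (fps_X * fps_exp 1) (fps_exp (real q - 1)) + TT (fps_exp (real q - 1)) (fps_X * fps_exp 1)"
    by (simp add: mult.assoc)
  have e: "fps_nth (fps_exp c) r = c ^ r / fact r" for c :: real and r by simp
  have x: "fps_nth (fps_X * fps_exp c) r = c ^ (r - 1) * r / fact r" for c :: real and r
  proof (cases r)
    case (Suc n)
    have "fact (Suc n) = real (Suc n) * fact n" by simp
    moreover have "fact n > (0::real)" by simp
    ultimately show ?thesis using Suc by (simp del: fact_Suc add: divide_simps)
  qed simp
  have o: "fps_nth (1::real fps) r = (if r = 0 then 1 else 0)" for r by simp
  have val: "fps_nth (fps_nth (F_q q) s) r =
      (if r = 0 then 1 else 0) * (if s = 0 then 1 else 0) - (if s = 0 then 1 / fact r else 0)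
      - (if r = 0 then 1 / fact s else 0) + 1 / (fact r * fact s) - r / (fact r * fact s)
      - s / (fact r * fact s) - k * r * s / (fact r * fact s)
      + r * (real q - 1) ^ s / (fact r * fact s) + s * (real q - 1) ^ r / (fact r * fact s)"
    unfolding FF by (simp only: fps_sub_nth fps_add_nth TT_nth e x o fps_mult_left_const_nth fps_nth_fps_const)
      (cases "r = 0"; cases "s = 0"; simp add: field_simps power_0_left)
  show ?thesis unfolding val k_def f_q_def
    by (cases "r = 0"; cases "s = 0"; simp add: field_simps)
qed



definition Hq :: "nat \<Rightarrow> real fps fps" where "Hq q = 1 - F_q q"
definition EE :: "real fps fps" where "EE = expX 1 * expY 1"
definition Gq :: "nat \<Rightarrow> real fps fps" where "Gq q = EE * inverse (Hq q)"
definition beta :: "nat \<Rightarrow> nat \<Rightarrow> nat \<Rightarrow> real" where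
  "beta q m n = fact m * fact n * fps_nth (fps_nth (Gq q) n) m"

lemma Hq0: "fps_nth (Hq q) 0 = 1"
  by (rule fps_ext) (simp add: Hq_def F_nth)

lemma Hq_inv: "Hq q * inverse (Hq q) = 1"
proof -
  have "inverse (Hq q) = fps_right_inverse (Hq q) (inverse (fps_nth (Hq q) 0))"
    by (simp add: fps_inverse_def)
  also have "\<dots> = fps_right_inverse (Hq q) 1" by (simp add: Hq0)
  finally show ?thesis using fps_right_inverse[of "Hq q" 1] by (simp add: Hq0)
qed

lemma Gq_eq: "Gq q = EE + Gq q * F_q q"
proof -
  have "Gq q * Hq q = EE" unfolding Gq_def using Hq_inv[of q] by (simp add: ac_simps)
  thus ?thesis by (simp add: Hq_def algebra_simps)
qed

lemma EE_nth: "fps_nth (fps_nth EE n) m = 1 / (fact m * fact n)"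
  by (simp add: EE_def expX_TT expY_TT TT_mult TT_nth)

lemma sum_flip: "(\<Sum>l\<le>m. g l) = (\<Sum>r\<le>m. g (m - r))" for g :: "nat \<Rightarrow> 'a::comm_monoid_add"
  by (rule sum.reindex_bij_witness[where i="\<lambda>r. m - r" and j="\<lambda>r. m - r"]) auto

lemma beta_rec: "beta q m n = 1 + (\<Sum>r\<le>m. \<Sum>s\<le>n. real (m choose r) * real (n choose s) *
    (if 1 \<le> r \<and> 1 \<le> s then f_q q r s else 0) * beta q (m - r) (n - s))"
proof -
  let ?G = "\<lambda>n m. fps_nth (fps_nth (Gq q) n) m"
  have "?G n m = 1 / (fact m * fact n) + (\<Sum>k\<le>n. \<Sum>l\<le>m. ?G k l * fps_nth (fps_nth (F_q q) (n - k)) (m - l))"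
    by (subst Gq_eq) (simp add: EE_nth fps_mult_nth atLeast0AtMost fps_sum_nth sum_distrib_left)
  hence "beta q m n = 1 + (\<Sum>k\<le>n. \<Sum>l\<le>m. fact m * fact n * (?G k l * fps_nth (fps_nth (F_q q) (n - k)) (m - l)))"
    by (simp add: beta_def sum_distrib_left field_simps)
  also have "\<dots> = 1 + (\<Sum>k\<le>n. \<Sum>l\<le>m. real (m choose l) * real (n choose k) *
    (if 1 \<le> m - l \<and> 1 \<le> n - k then f_q q (m - l) (n - k) else 0) * beta q l k)"
  proof -
    have "fact m * fact n * (?G k l * fps_nth (fps_nth (F_q q) (n - k)) (m - l)) =
      real (m choose l) * real (n choose k) *
      (if 1 \<le> m - l \<and> 1 \<le> n - k then f_q q (m - l) (n - k) else 0) * beta q l k"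
      if "k \<le> n" "l \<le> m" for k l
      using that by (simp add: F_nth beta_def binomial_fact field_simps)
    thus ?thesis by simp
  qed
  also have "\<dots> = 1 + (\<Sum>l\<le>m. \<Sum>k\<le>n. real (m choose l) * real (n choose k) *
    (if 1 \<le> m - l \<and> 1 \<le> n - k then f_q q (m - l) (n - k) else 0) * beta q l k)"
    by (subst sum.swap) simp
  also have "\<dots> = 1 + (\<Sum>r\<le>m. \<Sum>s\<le>n. real (m choose r) * real (n choose s) *
    (if 1 \<le> r \<and> 1 \<le> s then f_q q r s else 0) * beta q (m - r) (n - s))"
  proof -
    have "(\<Sum>l\<le>m. \<Sum>k\<le>n. real (m choose l) * real (n choose k) *
      (if 1 \<le> m - l \<and> 1 \<le> n - k then f_q q (m - l) (n - k) else 0) * beta q l k)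
      = (\<Sum>r\<le>m. \<Sum>k\<le>n. real (m choose (m - r)) * real (n choose k) *
      (if 1 \<le> m - (m - r) \<and> 1 \<le> n - k then f_q q (m - (m - r)) (n - k) else 0) * beta q (m - r) k)"
      by (rule sum_flip)
    also have "\<dots> = (\<Sum>r\<le>m. \<Sum>s\<le>n. real (m choose (m - r)) * real (n choose (n - s)) *
      (if 1 \<le> m - (m - r) \<and> 1 \<le> n - (n - s) then f_q q (m - (m - r)) (n - (n - s)) else 0) * beta q (m - r) (n - s))"
      by (rule sum.cong[OF refl], rule sum_flip)
    also have "\<dots> = (\<Sum>r\<le>m. \<Sum>s\<le>n. real (m choose r) * real (n choose s) *
    (if 1 \<le> r \<and> 1 \<le> s then f_q q r s else 0) * beta q (m - r) (n - s))"
      by (intro sum.cong refl) (simp add: binomial_symmetric[symmetric])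
    finally show ?thesis by simp
  qed
  finally show ?thesis .
qed



definition mats :: "nat \<Rightarrow> nat set \<Rightarrow> nat set \<Rightarrow> (nat \<Rightarrow> nat \<Rightarrow> nat) set" where
  "mats q I J = {A. (\<forall>i\<in>I. \<forall>j\<in>J. A i j < q) \<and> (\<forall>i j. i \<notin> I \<or> j \<notin> J \<longrightarrow> A i j = 0)}"

definition sw :: "nat \<Rightarrow> nat set \<Rightarrow> nat set \<Rightarrow> (nat \<Rightarrow> nat \<Rightarrow> nat) \<Rightarrow> bool" where
  "sw q I J A \<longleftrightarrow> (\<exists>a\<in>I. \<exists>b\<in>I. \<exists>c\<in>J. \<exists>d\<in>J. a \<noteq> b \<and> c \<noteq> d \<and>
      A a c < q - 1 \<and> A b d < q - 1 \<and> 0 < A a d \<and> 0 < A b c)"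

definition SF :: "nat \<Rightarrow> nat set \<Rightarrow> nat set \<Rightarrow> (nat \<Rightarrow> nat \<Rightarrow> nat) set" where
  "SF q I J = {A \<in> mats q I J. \<not> sw q I J A}"

definition BL :: "nat \<Rightarrow> nat set \<Rightarrow> nat set \<Rightarrow> (nat \<Rightarrow> nat \<Rightarrow> nat) set" where
  "BL q R C = {A \<in> SF q R C. \<forall>i\<in>R. \<forall>j\<in>C. 0 < A i j}"

definition NZ :: "nat set \<Rightarrow> nat set \<Rightarrow> (nat \<Rightarrow> nat \<Rightarrow> nat) \<Rightarrow> nat set" where
  "NZ I J A = {j\<in>J. \<exists>i\<in>I. A i j \<noteq> 0}"
definition RR :: "nat set \<Rightarrow> nat set \<Rightarrow> (nat \<Rightarrow> nat \<Rightarrow> nat) \<Rightarrow> nat set" where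
  "RR I J A = {i\<in>I. \<forall>j\<in>NZ I J A. A i j \<noteq> 0}"
definition CC :: "nat set \<Rightarrow> nat set \<Rightarrow> (nat \<Rightarrow> nat \<Rightarrow> nat) \<Rightarrow> nat set" where
  "CC I J A = {j\<in>NZ I J A. \<forall>i\<in>I. A i j \<noteq> 0 \<longrightarrow> i \<in> RR I J A}"
definition res :: "nat set \<Rightarrow> nat set \<Rightarrow> (nat \<Rightarrow> nat \<Rightarrow> nat) \<Rightarrow> (nat \<Rightarrow> nat \<Rightarrow> nat)" where
  "res S T A = (\<lambda>i j. if i \<in> S \<and> j \<in> T then A i j else 0)"

lemma finite_mats: "finite I \<Longrightarrow> finite J \<Longrightarrow> finite (mats q I J)"
proof -
  assume fin: "finite I" "finite J"
  let ?h = "\<lambda>f i j. if i \<in> I \<and> j \<in> J then f (i, j) else (0::nat)"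
  have "mats q I J \<subseteq> ?h ` (I \<times> J \<rightarrow>\<^sub>E {..<q})"
  proof
    fix A assume A: "A \<in> mats q I J"
    have "A = ?h (restrict (\<lambda>(i,j). A i j) (I \<times> J))"
      using A by (auto simp: mats_def fun_eq_iff)
    moreover have "restrict (\<lambda>(i,j). A i j) (I \<times> J) \<in> I \<times> J \<rightarrow>\<^sub>E {..<q}"
      using A by (auto simp: mats_def)
    ultimately show "A \<in> ?h ` (I \<times> J \<rightarrow>\<^sub>E {..<q})" by blast
  qed
  moreover have "finite (I \<times> J \<rightarrow>\<^sub>E {..<q})" using fin by (intro finite_PiE) auto
  ultimately show ?thesis by (meson finite_imageI finite_subset)
qed

lemma finite_SF: "finite I \<Longrightarrow> finite J \<Longrightarrow> finite (SF q I J)"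
  by (rule finite_subset[OF _ finite_mats[of I J q]]) (auto simp: SF_def)
lemma finite_BL: "finite I \<Longrightarrow> finite J \<Longrightarrow> finite (BL q I J)"
  by (rule finite_subset[OF _ finite_SF[of I J q]]) (auto simp: BL_def)

definition Phi :: "nat \<Rightarrow> (nat set \<times> nat set) \<times> (nat \<Rightarrow> nat \<Rightarrow> nat) \<times> (nat \<Rightarrow> nat \<Rightarrow> nat) \<Rightarrow> (nat \<Rightarrow> nat \<Rightarrow> nat)" where
  "Phi q x = (case x of ((R, C), (B, X)) \<Rightarrow>
     (\<lambda>i j. if i \<in> R then (if j \<in> C then B i j else if (\<exists>i'. X i' j \<noteq> 0) then q - 1 else 0) else X i j))"

definition Psi :: "nat set \<Rightarrow> nat set \<Rightarrow> (nat \<Rightarrow> nat \<Rightarrow> nat) \<Rightarrow> (nat set \<times> nat set) \<times> (nat \<Rightarrow> nat \<Rightarrow> nat) \<times> (nat \<Rightarrow> nat \<Rightarrow> nat)" where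
  "Psi I J A = ((RR I J A, CC I J A), (res (RR I J A) (CC I J A) A, res (I - RR I J A) (J - CC I J A) A))"

definition DD :: "nat \<Rightarrow> nat set \<Rightarrow> nat set \<Rightarrow> ((nat set \<times> nat set) \<times> (nat \<Rightarrow> nat \<Rightarrow> nat) \<times> (nat \<Rightarrow> nat \<Rightarrow> nat)) set" where
  "DD q I J = Sigma {(R, C). R \<subseteq> I \<and> C \<subseteq> J \<and> R \<noteq> {} \<and> C \<noteq> {}} (\<lambda>(R, C). BL q R C \<times> SF q (I - R) (J - C))"

context
  fixes q :: nat
  assumes q2: "2 \<le> q"
begin

lemma no_cross:
  assumes A: "A \<in> SF q I J" and "i \<in> I" "i' \<in> I" "j \<in> J" "j' \<in> J"
    and "A i j \<noteq> 0" "A i j' = 0" "A i' j = 0" "A i' j' \<noteq> 0"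
  shows False
proof -
  have "i \<noteq> i'" "j \<noteq> j'" using assms by auto
  hence "sw q I J A" unfolding sw_def using assms q2
    by (intro bexI[of _ i] bexI[of _ i'] bexI[of _ j'] bexI[of _ j]) auto
  thus False using A by (simp add: SF_def)
qed

lemma RR_ne:
  assumes A: "A \<in> SF q I J" and fin: "finite I" "finite J" and nz: "i0 \<in> I" "j0 \<in> J" "A i0 j0 \<noteq> 0"
  shows "RR I J A \<noteq> {}"
proof -
  define sp where "sp i = card {j\<in>J. A i j \<noteq> 0}" for i
  have "I \<noteq> {}" using nz by auto
  define M where "M = Max (sp ` I)"
  have "M \<in> sp ` I" unfolding M_def using fin \<open>I \<noteq> {}\<close> by (intro Max_in) auto
  then obtain i where i: "i \<in> I" "sp i = M" by auto
  have le: "sp i' \<le> sp i" if "i' \<in> I" for i'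
    using that fin i unfolding M_def by (auto intro: Max_ge)
  have "i \<in> RR I J A"
    unfolding RR_def
  proof (intro CollectI conjI ballI i(1))
    fix j assume "j \<in> NZ I J A"
    then obtain i' where j: "j \<in> J" "i' \<in> I" "A i' j \<noteq> 0" unfolding NZ_def by blast
    show "A i j \<noteq> 0"
    proof
      assume j0: "A i j = 0"
      have sub: "{j\<in>J. A i j \<noteq> 0} \<subseteq> {j\<in>J. A i' j \<noteq> 0}"
        using no_cross[OF A i(1) j(2) _ j(1)] j j0 by blast
      have "{j\<in>J. A i j \<noteq> 0} \<subset> {j\<in>J. A i' j \<noteq> 0}" using sub j j0 by blast
      hence "sp i < sp i'" unfolding sp_def using fin by (intro psubset_card_mono) auto
      thus False using le[OF j(2)] by simp
    qed
  qed
  thus ?thesis by auto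
qed


lemma CC_ne:
  assumes A: "A \<in> SF q I J" and fin: "finite I" "finite J" and nz: "i0 \<in> I" "j0 \<in> J" "A i0 j0 \<noteq> 0"
  shows "CC I J A \<noteq> {}"
proof -
  define sp where "sp j = card {i\<in>I. A i j \<noteq> 0}" for j
  have NZne: "NZ I J A \<noteq> {}" using nz unfolding NZ_def by blast
  have finNZ: "finite (NZ I J A)" using fin unfolding NZ_def by auto
  define M where "M = Min (sp ` NZ I J A)"
  have "M \<in> sp ` NZ I J A" unfolding M_def using finNZ NZne by (intro Min_in) auto
  then obtain j where j: "j \<in> NZ I J A" "sp j = M" by auto
  have le: "sp j \<le> sp j'" if "j' \<in> NZ I J A" for j'
    using that finNZ j unfolding M_def by (auto intro: Min_le)
  have "j \<in> CC I J A"
    unfolding CC_def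
  proof (intro CollectI conjI ballI impI j(1))
    fix i assume i: "i \<in> I" "A i j \<noteq> 0"
    show "i \<in> RR I J A"
    proof (rule ccontr)
      assume "i \<notin> RR I J A"
      then obtain j' where j': "j' \<in> NZ I J A" "A i j' = 0" using i unfolding RR_def by blast
      have jJ: "j \<in> J" "j' \<in> J" using j j' unfolding NZ_def by auto
      have sub: "{i\<in>I. A i j' \<noteq> 0} \<subseteq> {i\<in>I. A i j \<noteq> 0}"
        using no_cross[OF A i(1) _ jJ(1) jJ(2) i(2) j'(2)] by blast
      have "{i\<in>I. A i j' \<noteq> 0} \<subset> {i\<in>I. A i j \<noteq> 0}" using sub i j' by blast
      hence "sp j' < sp j" unfolding sp_def using fin by (intro psubset_card_mono) auto
      thus False using le[OF j'(1)] by simp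
    qed
  qed
  thus ?thesis by auto
qed

lemma full_part:
  assumes A: "A \<in> SF q I J" and i: "i \<in> RR I J A" and j: "j \<in> NZ I J A" "j \<notin> CC I J A"
  shows "A i j = q - 1"
proof -
  obtain i' where i': "i' \<in> I" "A i' j \<noteq> 0" "i' \<notin> RR I J A" using j unfolding CC_def by blast
  then obtain j'' where j'': "j'' \<in> NZ I J A" "A i' j'' = 0" unfolding RR_def by blast
  have iI: "i \<in> I" and ij'': "A i j'' \<noteq> 0" using i j'' unfolding RR_def by auto
  have jJ: "j \<in> J" "j'' \<in> J" using j j'' unfolding NZ_def by auto
  have lt: "A i j < q" using A iI jJ unfolding SF_def mats_def by auto
  show ?thesis
  proof (rule ccontr)
    assume "A i j \<noteq> q - 1"
    hence "A i j < q - 1" using lt by linarith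
    moreover have "i \<noteq> i'" "j \<noteq> j''" using ij'' j'' i' by auto
    ultimately have "sw q I J A" unfolding sw_def using iI i' jJ j'' ij'' q2
      by (intro bexI[of _ i] bexI[of _ i'] bexI[of _ j] bexI[of _ j'']) auto
    thus False using A by (simp add: SF_def)
  qed
qed


lemma Phi_Psi:
  assumes A: "A \<in> SF q I J"
  shows "Phi q (Psi I J A) = A"
proof -
  have Am: "\<And>i j. i \<notin> I \<or> j \<notin> J \<Longrightarrow> A i j = 0" using A unfolding SF_def mats_def by auto
  define R where "R = RR I J A"
  define C where "C = CC I J A"
  define X where "X = res (I - R) (J - C) A"
  have RI: "R \<subseteq> I" unfolding R_def RR_def by auto
  have "Phi q (Psi I J A) i j = A i j" for i j
  proof (cases "i \<in> R")
    case iR: True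
    show ?thesis
    proof (cases "j \<in> C")
      case True thus ?thesis using iR by (simp add: Phi_def Psi_def R_def C_def res_def)
    next
      case jC: False
      show ?thesis
      proof (cases "\<exists>i'. X i' j \<noteq> 0")
        case True
        then obtain i' where "i' \<in> I" "i' \<notin> R" "j \<in> J" "j \<notin> C" "A i' j \<noteq> 0"
          unfolding X_def res_def by (auto split: if_splits)
        hence "j \<in> NZ I J A" unfolding NZ_def by auto
        hence "A i j = q - 1" using full_part[OF A] iR jC unfolding R_def C_def by auto
        thus ?thesis using iR jC True by (simp add: Phi_def Psi_def R_def[symmetric] C_def[symmetric] X_def[symmetric])
      next
        case False
        have "A i j = 0"
        proof (rule ccontr)
          assume nz: "A i j \<noteq> 0"
          hence jJ: "j \<in> J" using Am by metis
          have "i \<in> I" using iR RI by auto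
          hence "j \<in> NZ I J A" using nz jJ unfolding NZ_def by auto
          then obtain i' where "i' \<in> I" "A i' j \<noteq> 0" "i' \<notin> R" using jC unfolding CC_def C_def R_def by auto
          hence "X i' j \<noteq> 0" using jJ jC unfolding X_def res_def by auto
          thus False using False by blast
        qed
        thus ?thesis using iR jC False by (simp add: Phi_def Psi_def R_def[symmetric] C_def[symmetric] X_def[symmetric])
      qed
    qed
  next
    case iR: False
    have "X i j = A i j"
    proof (cases "i \<in> I \<and> j \<in> J")
      case True
      show ?thesis
      proof (cases "j \<in> C")
        case True
        hence "A i j = 0" using iR \<open>i \<in> I \<and> j \<in> J\<close> unfolding C_def CC_def R_def by auto
        thus ?thesis unfolding X_def res_def by auto
      qed (use True iR in \<open>auto simp: X_def res_def\<close>)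
    qed (use Am in \<open>auto simp: X_def res_def\<close>)
    thus ?thesis using iR by (simp add: Phi_def Psi_def R_def[symmetric] C_def[symmetric] X_def[symmetric])
  qed
  thus ?thesis by (simp add: fun_eq_iff)
qed


lemma Psi_Phi:
  assumes x: "x \<in> DD q I J"
  shows "Psi I J (Phi q x) = x"
proof -
  obtain R C B X where xe: "x = ((R, C), (B, X))" by (metis prod.exhaust)
  have RC: "R \<subseteq> I" "C \<subseteq> J" "R \<noteq> {}" "C \<noteq> {}" and B: "B \<in> BL q R C"
    and X: "X \<in> SF q (I - R) (J - C)" using x unfolding DD_def xe by auto
  have Bpos: "\<And>i j. i \<in> R \<Longrightarrow> j \<in> C \<Longrightarrow> 0 < B i j" using B unfolding BL_def by auto
  have B0: "\<And>i j. i \<notin> R \<or> j \<notin> C \<Longrightarrow> B i j = 0" using B unfolding BL_def SF_def mats_def by auto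
  have X0: "\<And>i j. i \<notin> I - R \<or> j \<notin> J - C \<Longrightarrow> X i j = 0" using X unfolding SF_def mats_def by auto
  define A where "A = Phi q x"
  have Ae: "A i j = (if i \<in> R then (if j \<in> C then B i j else if (\<exists>i'. X i' j \<noteq> 0) then q - 1 else 0) else X i j)"
    for i j unfolding A_def xe Phi_def by simp
  have q1: "q - 1 \<noteq> 0" using q2 by simp
  have NZe: "NZ I J A = C \<union> {j. \<exists>i'. X i' j \<noteq> 0}"
  proof (intro equalityI subsetI)
    fix j assume "j \<in> NZ I J A"
    then obtain i where "i \<in> I" "j \<in> J" "A i j \<noteq> 0" unfolding NZ_def by auto
    thus "j \<in> C \<union> {j. \<exists>i'. X i' j \<noteq> 0}" unfolding Ae by (auto split: if_splits)
  next
    fix j assume j: "j \<in> C \<union> {j. \<exists>i'. X i' j \<noteq> 0}"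
    show "j \<in> NZ I J A"
    proof (cases "j \<in> C")
      case True
      obtain i where "i \<in> R" using RC by auto
      thus ?thesis using True RC Bpos[of i j] unfolding NZ_def Ae by (auto intro!: bexI[of _ i])
    next
      case False
      then obtain i' where i': "X i' j \<noteq> 0" using j by auto
      hence "i' \<in> I - R" "j \<in> J - C" using X0 by metis+
      thus ?thesis using i' unfolding NZ_def Ae by (auto intro!: bexI[of _ i'])
    qed
  qed
  have RRe: "RR I J A = R"
  proof (intro equalityI subsetI)
    fix i assume i: "i \<in> RR I J A"
    hence iI: "i \<in> I" unfolding RR_def by auto
    obtain j where j: "j \<in> C" using RC by auto
    hence "j \<in> NZ I J A" using NZe by auto
    hence "A i j \<noteq> 0" using i unfolding RR_def by auto
    thus "i \<in> R" using X0[of i j] j unfolding Ae by (auto split: if_splits)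
  next
    fix i assume i: "i \<in> R"
    show "i \<in> RR I J A" unfolding RR_def NZe using i RC Bpos q1 unfolding Ae by auto
  qed
  have CCe: "CC I J A = C"
  proof (intro equalityI subsetI)
    fix j assume j: "j \<in> CC I J A"
    show "j \<in> C"
    proof (rule ccontr)
      assume jC: "j \<notin> C"
      then obtain i' where i': "X i' j \<noteq> 0" using j NZe unfolding CC_def by auto
      hence "i' \<in> I - R" "j \<in> J - C" using X0 by metis+
      thus False using j i' unfolding CC_def RRe Ae by auto
    qed
  next
    fix j assume j: "j \<in> C"
    show "j \<in> CC I J A" unfolding CC_def RRe NZe using j X0 unfolding Ae by auto
  qed
  have "res R C A = B" using B0 unfolding res_def Ae by (auto simp: fun_eq_iff)
  moreover have "res (I - R) (J - C) A = X" using X0 unfolding res_def Ae by (auto simp: fun_eq_iff)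
  ultimately show ?thesis using RRe CCe unfolding Psi_def A_def xe by simp
qed


lemma res_SF:
  assumes A: "A \<in> SF q I J" and "S \<subseteq> I" "T \<subseteq> J"
  shows "res S T A \<in> SF q S T"
proof -
  have "res S T A \<in> mats q S T" using A assms(2,3) unfolding SF_def mats_def res_def by auto
  moreover have "\<not> sw q S T (res S T A)"
  proof
    assume "sw q S T (res S T A)"
    hence "sw q I J A" using assms(2,3) unfolding sw_def res_def by (auto 0 0) (blast+)
    thus False using A unfolding SF_def by auto
  qed
  ultimately show ?thesis unfolding SF_def by auto
qed

lemma Psi_in:
  assumes A: "A \<in> SF q I J" "A \<noteq> (\<lambda>_ _. 0)" and fin: "finite I" "finite J"
  shows "Psi I J A \<in> DD q I J"
proof -
  obtain i0 j0 where nz: "A i0 j0 \<noteq> 0" using A(2) by (auto simp: fun_eq_iff)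
  have "i0 \<in> I" "j0 \<in> J" using nz A(1) unfolding SF_def mats_def by (metis (mono_tags, lifting) mem_Collect_eq)+
  note ij = this nz
  have sub: "RR I J A \<subseteq> I" "CC I J A \<subseteq> J" unfolding RR_def CC_def NZ_def by auto
  have ne: "RR I J A \<noteq> {}" "CC I J A \<noteq> {}" using RR_ne[OF A(1) fin ij] CC_ne[OF A(1) fin ij] by auto
  have "res (RR I J A) (CC I J A) A \<in> BL q (RR I J A) (CC I J A)"
    unfolding BL_def using res_SF[OF A(1) sub]
    by (auto simp: res_def CC_def RR_def)
  moreover have "res (I - RR I J A) (J - CC I J A) A \<in> SF q (I - RR I J A) (J - CC I J A)"
    by (rule res_SF[OF A(1)]) auto
  ultimately show ?thesis using sub ne unfolding DD_def Psi_def by auto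
qed

lemma Phi_in:
  assumes x: "x \<in> DD q I J"
  shows "Phi q x \<in> SF q I J" "Phi q x \<noteq> (\<lambda>_ _. 0)"
proof -
  obtain R C B X where xe: "x = ((R, C), (B, X))" by (metis prod.exhaust)
  have RC: "R \<subseteq> I" "C \<subseteq> J" "R \<noteq> {}" "C \<noteq> {}" and B: "B \<in> BL q R C"
    and X: "X \<in> SF q (I - R) (J - C)" using x unfolding DD_def xe by auto
  have Bpos: "\<And>i j. i \<in> R \<Longrightarrow> j \<in> C \<Longrightarrow> 0 < B i j" using B unfolding BL_def by auto
  have Bq: "\<And>i j. i \<in> R \<Longrightarrow> j \<in> C \<Longrightarrow> B i j < q" using B unfolding BL_def SF_def mats_def by auto
  have Bsw: "\<not> sw q R C B" using B unfolding BL_def SF_def by auto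
  have Xq: "\<And>i j. i \<in> I - R \<Longrightarrow> j \<in> J - C \<Longrightarrow> X i j < q" using X unfolding SF_def mats_def by auto
  have Xsw: "\<not> sw q (I - R) (J - C) X" using X unfolding SF_def by auto
  have X0: "\<And>i j. i \<notin> I - R \<or> j \<notin> J - C \<Longrightarrow> X i j = 0" using X unfolding SF_def mats_def by auto
  define A where "A = Phi q x"
  have Ae: "A i j = (if i \<in> R then (if j \<in> C then B i j else if (\<exists>i'. X i' j \<noteq> 0) then q - 1 else 0) else X i j)"
    for i j unfolding A_def xe Phi_def by simp
  obtain i0 j0 where "i0 \<in> R" "j0 \<in> C" using RC by auto
  hence "A i0 j0 \<noteq> 0" using Bpos unfolding Ae by auto
  thus "Phi q x \<noteq> (\<lambda>_ _. 0)" unfolding A_def by auto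
  have "A \<in> mats q I J"
    unfolding mats_def
  proof (intro CollectI conjI allI ballI impI)
    fix i j assume "i \<in> I" "j \<in> J"
    thus "A i j < q" unfolding Ae using Bq Xq q2 X0 by auto
  next
    fix i j assume h: "i \<notin> I \<or> j \<notin> J"
    have "\<not> (\<exists>i'. X i' j \<noteq> 0)" if "j \<notin> J" using X0 that by (metis Diff_iff)
    thus "A i j = 0" unfolding Ae using h RC X0 by auto
  qed
  moreover have "\<not> sw q I J A"
  proof
    assume "sw q I J A"
    then obtain a b c d where abcd: "a \<in> I" "b \<in> I" "c \<in> J" "d \<in> J" "a \<noteq> b" "c \<noteq> d"
      "A a c < q - 1" "A b d < q - 1" "0 < A a d" "0 < A b c" unfolding sw_def by blast
    show False
    proof (cases "a \<in> R")
      case aR: True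
      show False
      proof (cases "b \<in> R")
        case bR: True
        have "c \<in> C" using abcd(7,10) aR bR unfolding Ae by (auto split: if_splits)
        moreover have "d \<in> C" using abcd(8,9) aR bR unfolding Ae by (auto split: if_splits)
        ultimately have "sw q R C B" using abcd aR bR unfolding sw_def Ae
          by (intro bexI[of _ a] bexI[of _ b] bexI[of _ c] bexI[of _ d]) auto
        thus False using Bsw by simp
      next
        case bR: False
        have "c \<notin> C" using abcd(10) bR X0 unfolding Ae by (auto split: if_splits)
        moreover have "X b c \<noteq> 0" using abcd(10) bR unfolding Ae by auto
        ultimately show False using abcd(7) aR unfolding Ae by (auto split: if_splits)
      qed
    next
      case aR: False
      show False
      proof (cases "b \<in> R")
        case bR: True
        have "d \<notin> C" using abcd(9) aR X0 unfolding Ae by (auto split: if_splits)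
        moreover have "X a d \<noteq> 0" using abcd(9) aR unfolding Ae by auto
        ultimately show False using abcd(8) bR unfolding Ae by (auto split: if_splits)
      next
        case bR: False
        have "c \<notin> C" "d \<notin> C" using abcd(9,10) aR bR X0 unfolding Ae by (auto split: if_splits)
        hence "sw q (I - R) (J - C) X" using abcd aR bR unfolding sw_def Ae
          by (intro bexI[of _ a] bexI[of _ b] bexI[of _ c] bexI[of _ d]) auto
        thus False using Xsw by simp
      qed
    qed
  qed
  ultimately show "Phi q x \<in> SF q I J" unfolding SF_def A_def by auto
qed


lemma card_SF_rec:
  assumes fin: "finite I" "finite J"
  shows "card (SF q I J) = 1 + (\<Sum>p\<in>{(R, C). R \<subseteq> I \<and> C \<subseteq> J \<and> R \<noteq> {} \<and> C \<noteq> {}}.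
            card (BL q (fst p) (snd p)) * card (SF q (I - fst p) (J - snd p)))"
proof -
  let ?Z = "(\<lambda>_ _. 0) :: nat \<Rightarrow> nat \<Rightarrow> nat"
  let ?P = "{(R, C). R \<subseteq> I \<and> C \<subseteq> J \<and> R \<noteq> {} \<and> C \<noteq> {}}"
  have bij: "bij_betw (Psi I J) (SF q I J - {?Z}) (DD q I J)"
  proof (rule bij_betw_byWitness[where f'="Phi q"])
    show "\<forall>a\<in>SF q I J - {?Z}. Phi q (Psi I J a) = a" using Phi_Psi by auto
    show "\<forall>a'\<in>DD q I J. Psi I J (Phi q a') = a'" using Psi_Phi by auto
    show "Psi I J ` (SF q I J - {?Z}) \<subseteq> DD q I J" using Psi_in[OF _ _ fin] by blast
    show "Phi q ` DD q I J \<subseteq> SF q I J - {?Z}" using Phi_in by auto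
  qed
  have Z: "?Z \<in> SF q I J" unfolding SF_def mats_def sw_def using q2 by auto
  have finP: "finite ?P"
    by (rule finite_subset[of _ "Pow I \<times> Pow J"]) (use fin in auto)
  have "card (SF q I J) = 1 + card (SF q I J - {?Z})"
  proof -
    have f: "finite (SF q I J)" using finite_SF[OF fin] .
    have "card (SF q I J) > 0" using Z f card_gt_0_iff by blast
    moreover have "card (SF q I J - {?Z}) = card (SF q I J) - 1" using Z f by (simp add: card_Diff_singleton)
    ultimately show ?thesis by linarith
  qed
  also have "card (SF q I J - {?Z}) = card (DD q I J)" using bij by (rule bij_betw_same_card)
  also have "\<dots> = (\<Sum>p\<in>?P. card (BL q (fst p) (snd p) \<times> SF q (I - fst p) (J - snd p)))"
  proof -
    have "\<forall>p\<in>?P. finite (BL q (fst p) (snd p) \<times> SF q (I - fst p) (J - snd p))"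
      using fin by (auto intro!: finite_cartesian_product finite_BL finite_SF intro: finite_subset)
    thus ?thesis unfolding DD_def using finP
      by (subst card_SigmaI) (auto simp: case_prod_beta)
  qed
  also have "\<dots> = (\<Sum>p\<in>?P. card (BL q (fst p) (snd p)) * card (SF q (I - fst p) (J - snd p)))"
    by (simp add: card_cartesian_product)
  finally show ?thesis .
qed

end



lemma sunflower:
  assumes "finite K" "K \<noteq> {}" "\<And>k. k \<in> K \<Longrightarrow> finite (S k) \<and> x \<in> S k"
    "\<And>k k'. k \<in> K \<Longrightarrow> k' \<in> K \<Longrightarrow> k \<noteq> k' \<Longrightarrow> S k \<inter> S k' = {x}"
  shows "card (\<Union>k\<in>K. S k) = 1 + (\<Sum>k\<in>K. card (S k) - 1)"
proof -
  have e: "(\<Union>k\<in>K. S k) - {x} = (\<Union>k\<in>K. S k - {x})" by blast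
  have xin: "x \<in> (\<Union>k\<in>K. S k)" using assms(2,3) by blast
  have fin: "finite (\<Union>k\<in>K. S k)" using assms by auto
  have "card (\<Union>k\<in>K. S k - {x}) = (\<Sum>k\<in>K. card (S k - {x}))"
    by (rule card_UN_disjoint) (use assms in auto)
  also have "\<dots> = (\<Sum>k\<in>K. card (S k) - 1)" using assms(3) by (simp add: card_Diff_singleton)
  finally have "card ((\<Union>k\<in>K. S k) - {x}) = (\<Sum>k\<in>K. card (S k) - 1)" unfolding e .
  moreover have "card (\<Union>k\<in>K. S k) = 1 + card ((\<Union>k\<in>K. S k) - {x})"
    using xin fin card_Suc_Diff1 by fastforce
  ultimately show ?thesis by simp
qed

definition POS :: "nat \<Rightarrow> nat set \<Rightarrow> nat set \<Rightarrow> (nat \<Rightarrow> nat \<Rightarrow> nat) set" where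
  "POS q R C = {A \<in> mats q R C. \<forall>i\<in>R. \<forall>j\<in>C. 0 < A i j}"
definition RowT :: "nat \<Rightarrow> nat set \<Rightarrow> nat set \<Rightarrow> nat \<Rightarrow> (nat \<Rightarrow> nat \<Rightarrow> nat) set" where
  "RowT q R C i0 = {A \<in> POS q R C. \<forall>i\<in>R. \<forall>j\<in>C. i \<noteq> i0 \<longrightarrow> A i j = q - 1}"
definition ColT :: "nat \<Rightarrow> nat set \<Rightarrow> nat set \<Rightarrow> nat \<Rightarrow> (nat \<Rightarrow> nat \<Rightarrow> nat) set" where
  "ColT q R C j0 = {A \<in> POS q R C. \<forall>i\<in>R. \<forall>j\<in>C. j \<noteq> j0 \<longrightarrow> A i j = q - 1}"
definition FullM :: "nat \<Rightarrow> nat set \<Rightarrow> nat set \<Rightarrow> (nat \<Rightarrow> nat \<Rightarrow> nat)" where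
  "FullM q R C = (\<lambda>i j. if i \<in> R \<and> j \<in> C then q - 1 else 0)"

context
  fixes q :: nat
  assumes q2: "2 \<le> q"
begin

lemma BL_small:
  assumes A: "A \<in> BL q R C" and "i \<in> R" "i' \<in> R" "j \<in> C" "j' \<in> C" "i \<noteq> i'" "j \<noteq> j'"
    "A i j < q - 1" "A i' j' < q - 1"
  shows False
proof -
  have "0 < A i j'" "0 < A i' j" using A assms unfolding BL_def by auto
  hence "sw q R C A" unfolding sw_def using assms
    by (intro bexI[of _ i] bexI[of _ i'] bexI[of _ j] bexI[of _ j']) auto
  thus False using A unfolding BL_def SF_def by auto
qed

lemma BL_eq:
  assumes ne: "R \<noteq> {}"
  shows "BL q R C = (\<Union>i0\<in>R. RowT q R C i0) \<union> (\<Union>j0\<in>C. ColT q R C j0)"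
proof (intro equalityI subsetI)
  fix A assume A: "A \<in> BL q R C"
  have Aq: "\<And>i j. i \<in> R \<Longrightarrow> j \<in> C \<Longrightarrow> A i j < q" using A unfolding BL_def SF_def mats_def by auto
  have P: "A \<in> POS q R C" using A unfolding BL_def SF_def POS_def by auto
  let ?sm = "\<lambda>i j. i \<in> R \<and> j \<in> C \<and> A i j < q - 1"
  have full: "A i j = q - 1" if "i \<in> R" "j \<in> C" "\<not> ?sm i j" for i j
    using Aq[OF that(1,2)] that by auto
  show "A \<in> (\<Union>i0\<in>R. RowT q R C i0) \<union> (\<Union>j0\<in>C. ColT q R C j0)"
  proof (cases "\<exists>i j i' j'. ?sm i j \<and> ?sm i' j' \<and> i \<noteq> i'")
    case False
    show ?thesis
    proof (cases "\<exists>i j. ?sm i j")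
      case True
      then obtain i0 j0 where s0: "?sm i0 j0" by blast
      have "A \<in> RowT q R C i0" unfolding RowT_def using P full False s0 by blast
      thus ?thesis using s0 by blast
    next
      case False
      obtain i0 where "i0 \<in> R" using ne by auto
      moreover have "A \<in> RowT q R C i0" unfolding RowT_def using P full False by blast
      ultimately show ?thesis by blast
    qed
  next
    case True
    then obtain i j i' j' where s: "?sm i j" "?sm i' j'" "i \<noteq> i'" by blast
    have jj: "j = j'" using BL_small[OF A, of i i' j j'] s by blast
    have "A \<in> ColT q R C j" unfolding ColT_def
    proof (intro CollectI conjI ballI impI P)
      fix i'' j'' assume h: "i'' \<in> R" "j'' \<in> C" "j'' \<noteq> j"
      show "A i'' j'' = q - 1"
      proof (rule full[OF h(1,2)], rule notI)
        assume s'': "?sm i'' j''"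
        have "i'' = i" using BL_small[OF A, of i'' i j'' j] s s'' h by blast
        moreover have "i'' = i'" using BL_small[OF A, of i'' i' j'' j] s s'' h jj by blast
        ultimately show False using s by simp
      qed
    qed
    thus ?thesis using s by blast
  qed
next
  fix A assume A: "A \<in> (\<Union>i0\<in>R. RowT q R C i0) \<union> (\<Union>j0\<in>C. ColT q R C j0)"
  hence P: "A \<in> POS q R C" unfolding RowT_def ColT_def by auto
  have "\<not> sw q R C A"
  proof
    assume "sw q R C A"
    then obtain a b c d where abcd: "a \<in> R" "b \<in> R" "c \<in> C" "d \<in> C" "a \<noteq> b" "c \<noteq> d"
      "A a c < q - 1" "A b d < q - 1" unfolding sw_def by blast
    from A show False
    proof
      assume "A \<in> (\<Union>i0\<in>R. RowT q R C i0)"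
      then obtain i0 where "\<forall>i\<in>R. \<forall>j\<in>C. i \<noteq> i0 \<longrightarrow> A i j = q - 1" unfolding RowT_def by blast
      thus False using abcd by (metis less_irrefl)
    next
      assume "A \<in> (\<Union>j0\<in>C. ColT q R C j0)"
      then obtain j0 where "\<forall>i\<in>R. \<forall>j\<in>C. j \<noteq> j0 \<longrightarrow> A i j = q - 1" unfolding ColT_def by blast
      thus False using abcd by (metis less_irrefl)
    qed
  qed
  thus "A \<in> BL q R C" using P unfolding BL_def SF_def POS_def by auto
qed


lemma FullM_in: "FullM q R C \<in> RowT q R C i" "FullM q R C \<in> ColT q R C j"
  using q2 unfolding FullM_def RowT_def ColT_def POS_def mats_def by auto

lemma RowT_inter: "i0 \<in> R \<Longrightarrow> i1 \<in> R \<Longrightarrow> i0 \<noteq> i1 \<Longrightarrow> RowT q R C i0 \<inter> RowT q R C i1 = {FullM q R C}"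
  using FullM_in unfolding RowT_def POS_def mats_def FullM_def by (auto simp: fun_eq_iff) metis+

lemma ColT_inter: "j0 \<in> C \<Longrightarrow> j1 \<in> C \<Longrightarrow> j0 \<noteq> j1 \<Longrightarrow> ColT q R C j0 \<inter> ColT q R C j1 = {FullM q R C}"
  using FullM_in unfolding ColT_def POS_def mats_def FullM_def by (auto simp: fun_eq_iff) metis+

lemma card_RowT:
  assumes "i0 \<in> R" "finite C"
  shows "card (RowT q R C i0) = (q - 1) ^ card C"
proof -
  let ?f = "\<lambda>A. restrict (A i0) C"
  let ?g = "\<lambda>g i j. if i \<in> R \<and> j \<in> C then (if i = i0 then g j else q - 1) else 0"
  have "bij_betw ?f (RowT q R C i0) (C \<rightarrow>\<^sub>E {1..<q})"
  proof (rule bij_betw_byWitness[where f'="?g"])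
    show "\<forall>a\<in>RowT q R C i0. ?g (?f a) = a"
      using assms unfolding RowT_def POS_def mats_def by (auto simp: fun_eq_iff)
    show "\<forall>a'\<in>C \<rightarrow>\<^sub>E {1..<q}. ?f (?g a') = a'"
      using assms by (auto simp: fun_eq_iff PiE_def extensional_def)
    show "?f ` RowT q R C i0 \<subseteq> C \<rightarrow>\<^sub>E {1..<q}"
      using assms unfolding RowT_def POS_def mats_def by (auto simp: Suc_le_eq)
    show "?g ` (C \<rightarrow>\<^sub>E {1..<q}) \<subseteq> RowT q R C i0"
      using assms q2 unfolding RowT_def POS_def mats_def by (auto simp: PiE_def Pi_def)
  qed
  hence "card (RowT q R C i0) = card (C \<rightarrow>\<^sub>E {1..<q})" by (rule bij_betw_same_card)
  also have "\<dots> = (q - 1) ^ card C" using assms by (simp add: card_PiE)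
  finally show ?thesis .
qed

lemma card_ColT:
  assumes "j0 \<in> C" "finite R"
  shows "card (ColT q R C j0) = (q - 1) ^ card R"
proof -
  let ?f = "\<lambda>A. restrict (\<lambda>i. A i j0) R"
  let ?g = "\<lambda>g i j. if i \<in> R \<and> j \<in> C then (if j = j0 then g i else q - 1) else 0"
  have "bij_betw ?f (ColT q R C j0) (R \<rightarrow>\<^sub>E {1..<q})"
  proof (rule bij_betw_byWitness[where f'="?g"])
    show "\<forall>a\<in>ColT q R C j0. ?g (?f a) = a"
      using assms unfolding ColT_def POS_def mats_def by (auto simp: fun_eq_iff)
    show "\<forall>a'\<in>R \<rightarrow>\<^sub>E {1..<q}. ?f (?g a') = a'"
      using assms by (auto simp: fun_eq_iff PiE_def extensional_def)
    show "?f ` ColT q R C j0 \<subseteq> R \<rightarrow>\<^sub>E {1..<q}"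
      using assms unfolding ColT_def POS_def mats_def by (auto simp: Suc_le_eq)
    show "?g ` (R \<rightarrow>\<^sub>E {1..<q}) \<subseteq> ColT q R C j0"
      using assms q2 unfolding ColT_def POS_def mats_def by (auto simp: PiE_def Pi_def)
  qed
  hence "card (ColT q R C j0) = card (R \<rightarrow>\<^sub>E {1..<q})" by (rule bij_betw_same_card)
  also have "\<dots> = (q - 1) ^ card R" using assms by (simp add: card_PiE)
  finally show ?thesis .
qed

lemma card_RowColT:
  assumes "i0 \<in> R" "j0 \<in> C"
  shows "card (RowT q R C i0 \<inter> ColT q R C j0) = q - 1"
proof -
  let ?f = "\<lambda>A. A i0 j0"
  let ?g = "\<lambda>v i j. if i \<in> R \<and> j \<in> C then (if i = i0 \<and> j = j0 then v else q - 1) else 0"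
  have "bij_betw ?f (RowT q R C i0 \<inter> ColT q R C j0) {1..<q}"
  proof (rule bij_betw_byWitness[where f'="?g"])
    show "\<forall>a\<in>RowT q R C i0 \<inter> ColT q R C j0. ?g (?f a) = a"
      using assms unfolding RowT_def ColT_def POS_def mats_def by (auto simp: fun_eq_iff)
    show "\<forall>a'\<in>{1..<q}. ?f (?g a') = a'" using assms by auto
    show "?f ` (RowT q R C i0 \<inter> ColT q R C j0) \<subseteq> {1..<q}"
      using assms unfolding RowT_def POS_def mats_def by (auto simp: Suc_le_eq)
    show "?g ` {1..<q} \<subseteq> RowT q R C i0 \<inter> ColT q R C j0"
      using assms q2 unfolding RowT_def ColT_def POS_def mats_def by auto
  qed
  hence "card (RowT q R C i0 \<inter> ColT q R C j0) = card {1..<q}" by (rule bij_betw_same_card)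
  thus ?thesis by simp
qed


lemma card_BL:
  assumes fin: "finite R" "finite C" and ne: "R \<noteq> {}" "C \<noteq> {}"
  shows "real (card (BL q R C)) = f_q q (card R) (card C)"
proof -
  let ?U1 = "\<Union>i0\<in>R. RowT q R C i0"
  let ?U2 = "\<Union>j0\<in>C. ColT q R C j0"
  have finRT: "finite (RowT q R C i)" for i
    by (rule finite_subset[OF _ finite_mats[OF fin, of q]]) (auto simp: RowT_def POS_def)
  have finCT: "finite (ColT q R C j)" for j
    by (rule finite_subset[OF _ finite_mats[OF fin, of q]]) (auto simp: ColT_def POS_def)
  have c1: "card ?U1 = 1 + card R * ((q - 1) ^ card C - 1)"
    by (subst sunflower[where x="FullM q R C"]) (use fin ne finRT FullM_in RowT_inter card_RowT in auto)
  have c2: "card ?U2 = 1 + card C * ((q - 1) ^ card R - 1)"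
    by (subst sunflower[where x="FullM q R C"]) (use fin ne finCT FullM_in ColT_inter card_ColT in auto)
  have i: "?U1 \<inter> ?U2 = (\<Union>p\<in>R \<times> C. RowT q R C (fst p) \<inter> ColT q R C (snd p))" by auto
  have c3: "card (?U1 \<inter> ?U2) = 1 + card R * card C * (q - 2)"
  proof -
    have "card (\<Union>p\<in>R \<times> C. RowT q R C (fst p) \<inter> ColT q R C (snd p)) =
      1 + (\<Sum>p\<in>R \<times> C. card (RowT q R C (fst p) \<inter> ColT q R C (snd p)) - 1)"
    proof (rule sunflower[where x="FullM q R C"])
      show "finite (R \<times> C)" "R \<times> C \<noteq> {}" using fin ne by auto
      show "finite (RowT q R C (fst k) \<inter> ColT q R C (snd k)) \<and> FullM q R C \<in> RowT q R C (fst k) \<inter> ColT q R C (snd k)"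
        for k using finRT FullM_in by auto
      fix k k' assume "k \<in> R \<times> C" "k' \<in> R \<times> C" "k \<noteq> k'"
      thus "RowT q R C (fst k) \<inter> ColT q R C (snd k) \<inter> (RowT q R C (fst k') \<inter> ColT q R C (snd k')) = {FullM q R C}"
        using RowT_inter[of "fst k" R "fst k'" C] ColT_inter[of "snd k" C "snd k'" R] FullM_in
        by (cases "fst k = fst k'") (auto simp: prod_eq_iff)
    qed
    also have "\<dots> = 1 + card R * card C * (q - 2)"
    proof -
      have "(\<Sum>p\<in>R \<times> C. card (RowT q R C (fst p) \<inter> ColT q R C (snd p)) - 1) = (\<Sum>p\<in>R \<times> C. q - 2)"
        by (rule sum.cong) (auto simp: card_RowColT)
      thus ?thesis by (simp add: card_cartesian_product)
    qed
    finally show ?thesis unfolding i .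
  qed
  have fU: "finite ?U1" "finite ?U2" using fin finRT finCT by auto
  have "card (BL q R C) + card (?U1 \<inter> ?U2) = card ?U1 + card ?U2"
    unfolding BL_eq[OF ne(1)] using card_Un_Int[OF fU] by simp
  hence "real (card (BL q R C)) = real (card ?U1) + real (card ?U2) - real (card (?U1 \<inter> ?U2))"
    by linarith
  also have "\<dots> = f_q q (card R) (card C)"
  proof -
    have p1: "real ((q - 1) ^ n - 1) = (real q - 1) ^ n - 1" for n
    proof -
      have "1 \<le> (q - 1) ^ n" using q2 by simp
      thus ?thesis using q2 by (simp add: of_nat_diff)
    qed
    have p2: "real (q - 2) = real q - 2" using q2 by simp
    show ?thesis unfolding c1 c2 c3 f_q_def using p1 p2 by (simp add: algebra_simps)
  qed
  finally show ?thesis .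
qed

end



lemma sum_pow_card:
  assumes "finite I"
  shows "(\<Sum>R\<in>Pow I. g (card R)) = (\<Sum>r\<le>card I. real (card I choose r) * g r)"
proof -
  have "(\<Sum>R\<in>Pow I. g (card R)) = (\<Sum>r\<le>card I. \<Sum>R\<in>{R. R \<in> Pow I \<and> card R = r}. g (card R))"
    by (rule sum.group[symmetric]) (use assms card_mono in auto)
  also have "\<dots> = (\<Sum>r\<le>card I. real (card I choose r) * g r)"
  proof (rule sum.cong[OF refl])
    fix r
    have "(\<Sum>R\<in>{R. R \<in> Pow I \<and> card R = r}. g (card R)) = (\<Sum>R\<in>{R. R \<subseteq> I \<and> card R = r}. g r)"
      by (rule sum.cong) auto
    also have "\<dots> = real (card I choose r) * g r" using n_subsets[OF assms, of r] by simp
    finally show "(\<Sum>R\<in>{R. R \<in> Pow I \<and> card R = r}. g (card R)) = real (card I choose r) * g r" .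
  qed
  finally show ?thesis .
qed

lemma count_SF:
  assumes q2: "2 \<le> q" and fin: "finite I" "finite J"
  shows "real (card (SF q I J)) = beta q (card I) (card J)"
  using fin
proof (induction "card I" arbitrary: I J rule: less_induct)
  case less
  note fin = less.prems
  let ?P = "{(R, C). R \<subseteq> I \<and> C \<subseteq> J \<and> R \<noteq> {} \<and> C \<noteq> {}}"
  define h where "h r s = (if 1 \<le> r \<and> 1 \<le> s then f_q q r s else 0) * beta q (card I - r) (card J - s)" for r s
  have "real (card (SF q I J)) = 1 + (\<Sum>p\<in>?P. real (card (BL q (fst p) (snd p))) * real (card (SF q (I - fst p) (J - snd p))))"
    using card_SF_rec[OF q2 fin] by simp
  also have "\<dots> = 1 + (\<Sum>p\<in>?P. h (card (fst p)) (card (snd p)))"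
  proof -
    have "real (card (BL q (fst p) (snd p))) * real (card (SF q (I - fst p) (J - snd p))) = h (card (fst p)) (card (snd p))"
      if "p \<in> ?P" for p
    proof -
      obtain R C where p: "p = (R, C)" "R \<subseteq> I" "C \<subseteq> J" "R \<noteq> {}" "C \<noteq> {}" using \<open>p \<in> ?P\<close> by auto
      have fRC: "finite R" "finite C" using p fin finite_subset by auto
      have "card R \<ge> 1" "card C \<ge> 1" using fRC p by (auto simp: Suc_le_eq card_gt_0_iff)
      moreover have "card (I - R) < card I" using fin p fRC
        by (metis card_Diff_subset card_gt_0_iff diff_less order_refl subset_empty finite_subset card_mono le_neq_implies_less)
      moreover have "card (I - R) = card I - card R" "card (J - C) = card J - card C"
        using p fRC by (auto simp: card_Diff_subset)
      ultimately show ?thesis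
        using less.hyps[of "I - R" "J - C"] fin card_BL[OF q2 fRC p(4,5)] p unfolding h_def by auto
    qed
    thus ?thesis by simp
  qed
  also have "\<dots> = 1 + (\<Sum>p\<in>Pow I \<times> Pow J. h (card (fst p)) (card (snd p)))"
  proof -
    have "(\<Sum>p\<in>?P. h (card (fst p)) (card (snd p))) = (\<Sum>p\<in>Pow I \<times> Pow J. h (card (fst p)) (card (snd p)))"
    proof (rule sum.mono_neutral_left)
      show "finite (Pow I \<times> Pow J)" using fin by auto
      show "?P \<subseteq> Pow I \<times> Pow J" by auto
      show "\<forall>p\<in>Pow I \<times> Pow J - ?P. h (card (fst p)) (card (snd p)) = 0"
        using fin by (auto simp: h_def dest: finite_subset)
    qed
    thus ?thesis by simp
  qed
  also have "\<dots> = 1 + (\<Sum>R\<in>Pow I. \<Sum>C\<in>Pow J. h (card R) (card C))"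
    by (simp add: sum.cartesian_product case_prod_beta)
  also have "\<dots> = 1 + (\<Sum>R\<in>Pow I. \<Sum>s\<le>card J. real (card J choose s) * h (card R) s)"
    using sum_pow_card[OF fin(2)] by simp
  also have "\<dots> = 1 + (\<Sum>r\<le>card I. real (card I choose r) * (\<Sum>s\<le>card J. real (card J choose s) * h r s))"
    using sum_pow_card[OF fin(1), of "\<lambda>r. \<Sum>s\<le>card J. real (card J choose s) * h r s"] by simp
  also have "\<dots> = beta q (card I) (card J)"
    by (subst beta_rec) (simp add: h_def sum_distrib_left algebra_simps)
  finally show ?case .
qed




context
  fixes q :: nat
  assumes q2: "2 \<le> q"
begin

lemma full_row_forced:
  assumes fin: "finite C" and B: "\<And>j. j \<in> C \<Longrightarrow> B j < q"
    and s: "(\<Sum>j\<in>C. B j) = (\<Sum>j\<in>C. (q - 1::nat))" and j: "j \<in> C"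
  shows "B j = q - 1"
proof (rule sum_mono_inv[OF s _ j fin])
  fix i assume "i \<in> C"
  from B[OF this] show "B i \<le> q - 1" by arith
qed

lemma sum_split1:
  fixes f :: "nat \<Rightarrow> nat"
  assumes "finite S" "x \<in> S"
  shows "(\<Sum>y\<in>S. f y) = f x + (\<Sum>y\<in>S - {x}. f y)"
  using assms by (simp add: sum.remove)

lemma block_uniq_row:
  assumes fin: "finite R" "finite C" and A: "A \<in> RowT q R C i0" and i0: "i0 \<in> R"
    and B: "\<And>i j. i \<in> R \<Longrightarrow> j \<in> C \<Longrightarrow> B i j < q"
    and rs: "\<And>i. i \<in> R \<Longrightarrow> (\<Sum>j\<in>C. B i j) = (\<Sum>j\<in>C. A i j)"
    and cs: "\<And>j. j \<in> C \<Longrightarrow> (\<Sum>i\<in>R. B i j) = (\<Sum>i\<in>R. A i j)"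
    and ij: "i \<in> R" "j \<in> C"
  shows "B i j = A i j"
proof -
  have Af: "\<And>i j. i \<in> R \<Longrightarrow> j \<in> C \<Longrightarrow> i \<noteq> i0 \<Longrightarrow> A i j = q - 1" using A unfolding RowT_def by auto
  have Bf: "B i j = A i j" if "i \<in> R" "j \<in> C" "i \<noteq> i0" for i j
  proof -
    have s: "(\<Sum>j\<in>C. B i j) = (\<Sum>j\<in>C. q - 1)" using rs[OF that(1)] Af that by simp
    have h: "\<And>j. j \<in> C \<Longrightarrow> B i j < q" using B that(1) by blast
    have "B i j = q - 1" using full_row_forced[OF fin(2) h s that(2)] .
    thus ?thesis using Af that by simp
  qed
  show ?thesis
  proof (cases "i = i0")
    case True
    have "(\<Sum>i\<in>R. B i j) = B i0 j + (\<Sum>i\<in>R - {i0}. B i j)" by (rule sum_split1[OF fin(1) i0])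
    moreover have "(\<Sum>i\<in>R. A i j) = A i0 j + (\<Sum>i\<in>R - {i0}. A i j)" by (rule sum_split1[OF fin(1) i0])
    moreover have "(\<Sum>i\<in>R - {i0}. B i j) = (\<Sum>i\<in>R - {i0}. A i j)" using Bf ij by (intro sum.cong) auto
    ultimately have "B i0 j = A i0 j" using cs[OF ij(2)] by linarith
    thus ?thesis using True by simp
  next
    case False
    thus ?thesis using Bf ij by blast
  qed
qed

lemma block_uniq_col:
  assumes fin: "finite R" "finite C" and A: "A \<in> ColT q R C j0" and j0: "j0 \<in> C"
    and B: "\<And>i j. i \<in> R \<Longrightarrow> j \<in> C \<Longrightarrow> B i j < q"
    and rs: "\<And>i. i \<in> R \<Longrightarrow> (\<Sum>j\<in>C. B i j) = (\<Sum>j\<in>C. A i j)"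
    and cs: "\<And>j. j \<in> C \<Longrightarrow> (\<Sum>i\<in>R. B i j) = (\<Sum>i\<in>R. A i j)"
    and ij: "i \<in> R" "j \<in> C"
  shows "B i j = A i j"
proof -
  have Af: "\<And>i j. i \<in> R \<Longrightarrow> j \<in> C \<Longrightarrow> j \<noteq> j0 \<Longrightarrow> A i j = q - 1" using A unfolding ColT_def by auto
  have Bf: "B i j = A i j" if "i \<in> R" "j \<in> C" "j \<noteq> j0" for i j
  proof -
    have s: "(\<Sum>i\<in>R. B i j) = (\<Sum>i\<in>R. q - 1)" using cs[OF that(2)] Af that by simp
    have h: "\<And>i. i \<in> R \<Longrightarrow> B i j < q" using B that(2) by blast
    have "B i j = q - 1" using full_row_forced[OF fin(1) h s that(1)] .
    thus ?thesis using Af that by simp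
  qed
  show ?thesis
  proof (cases "j = j0")
    case True
    have "(\<Sum>j\<in>C. B i j) = B i j0 + (\<Sum>j\<in>C - {j0}. B i j)" by (rule sum_split1[OF fin(2) j0])
    moreover have "(\<Sum>j\<in>C. A i j) = A i j0 + (\<Sum>j\<in>C - {j0}. A i j)" by (rule sum_split1[OF fin(2) j0])
    moreover have "(\<Sum>j\<in>C - {j0}. B i j) = (\<Sum>j\<in>C - {j0}. A i j)" using Bf ij by (intro sum.cong) auto
    ultimately have "B i j0 = A i j0" using rs[OF ij(1)] by linarith
    thus ?thesis using True by simp
  next
    case False
    thus ?thesis using Bf ij by blast
  qed
qed


lemma split_sum:
  fixes f :: "nat \<Rightarrow> nat"
  assumes "T \<subseteq> S" "finite S"
  shows "(\<Sum>x\<in>S. f x) = (\<Sum>x\<in>T. f x) + (\<Sum>x\<in>S - T. f x)"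
  using sum.subset_diff[OF assms, of f] by simp

lemma uniq:
  assumes "finite I" "finite J" "A \<in> SF q I J" "B \<in> mats q I J"
    "\<forall>i\<in>I. (\<Sum>j\<in>J. B i j) = (\<Sum>j\<in>J. A i j)" "\<forall>j\<in>J. (\<Sum>i\<in>I. B i j) = (\<Sum>i\<in>I. A i j)"
  shows "B = A"
  using assms
proof (induction "card I" arbitrary: I J A B rule: less_induct)
  case less
  note fin = less.prems(1,2) and A = less.prems(3) and B = less.prems(4)
    and rs = less.prems(5) and cs = less.prems(6)
  have Aq: "\<And>i j. i \<in> I \<Longrightarrow> j \<in> J \<Longrightarrow> A i j < q" using A unfolding SF_def mats_def by auto
  have A0: "\<And>i j. i \<notin> I \<or> j \<notin> J \<Longrightarrow> A i j = 0" using A unfolding SF_def mats_def by auto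
  have Bq: "\<And>i j. i \<in> I \<Longrightarrow> j \<in> J \<Longrightarrow> B i j < q" using B unfolding mats_def by auto
  have B0: "\<And>i j. i \<notin> I \<or> j \<notin> J \<Longrightarrow> B i j = 0" using B unfolding mats_def by auto
  show ?case
  proof (cases "\<exists>i\<in>I. \<exists>j\<in>J. A i j \<noteq> 0")
    case False
    have "B i j = A i j" for i j
    proof (cases "i \<in> I \<and> j \<in> J")
      case True
      have "(\<Sum>i\<in>I. B i j) = 0" using cs False True by simp
      hence "B i j = 0" using True fin by simp
      thus ?thesis using False True by auto
    qed (use A0 B0 in auto)
    thus ?thesis by (simp add: fun_eq_iff)
  next
    case True
    then obtain i0 j0 where ij0: "i0 \<in> I" "j0 \<in> J" "A i0 j0 \<noteq> 0" by blast
    define R where "R = RR I J A"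
    define C where "C = CC I J A"
    define N where "N = NZ I J A"
    have RI: "R \<subseteq> I" and CN: "C \<subseteq> N" and NJ: "N \<subseteq> J" and CJ: "C \<subseteq> J"
      unfolding R_def C_def N_def RR_def CC_def NZ_def by auto
    have Rne: "R \<noteq> {}" unfolding R_def by (rule RR_ne[OF q2 A fin ij0])
    have finR: "finite R" "finite C" using RI CJ fin finite_subset by auto
    have Fz: "A i j = 0" if "j \<in> J - N" for i j
      using that A0 unfolding N_def NZ_def by auto
    have Ff: "A i j = q - 1" if "i \<in> R" "j \<in> N - C" for i j
      using full_part[OF q2 A] that unfolding R_def C_def N_def by auto
    have Fc: "A i j = 0" if "i \<notin> R" "j \<in> C" for i j
      using that A0 unfolding C_def CC_def R_def by auto
    have S0: "B i j = 0" if "j \<in> J - N" for i j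
    proof (cases "i \<in> I")
      case True
      have "(\<Sum>i\<in>I. B i j) = 0" using cs that Fz by simp
      thus ?thesis using True fin by simp
    qed (use B0 in auto)
    have Le: "B i j \<le> A i j" if "i \<in> R" "j \<in> J - C" for i j
    proof (cases "j \<in> N")
      case True
      thus ?thesis using Ff[OF that(1)] Bq[of i j] that RI by force
    qed (use S0 that in auto)
    let ?a1 = "\<Sum>i\<in>R. \<Sum>j\<in>C. B i j" and ?a2 = "\<Sum>i\<in>R. \<Sum>j\<in>J - C. B i j"
    let ?a3 = "\<Sum>j\<in>C. \<Sum>i\<in>I - R. B i j"
    let ?b1 = "\<Sum>i\<in>R. \<Sum>j\<in>C. A i j" and ?b2 = "\<Sum>i\<in>R. \<Sum>j\<in>J - C. A i j"
    have E1: "?a1 + ?a2 = ?b1 + ?b2"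
    proof -
      have "(\<Sum>i\<in>R. \<Sum>j\<in>J. B i j) = (\<Sum>i\<in>R. \<Sum>j\<in>J. A i j)" by (rule sum.cong[OF refl]) (use rs RI in auto)
      thus ?thesis using split_sum[OF CJ fin(2)] by (simp add: sum.distrib)
    qed
    have E2: "?a1 + ?a3 = ?b1"
    proof -
      have "(\<Sum>j\<in>C. \<Sum>i\<in>I. B i j) = (\<Sum>j\<in>C. \<Sum>i\<in>I. A i j)" by (rule sum.cong[OF refl]) (use cs CJ in auto)
      moreover have "(\<Sum>j\<in>C. \<Sum>i\<in>I - R. A i j) = 0" using Fc by simp
      ultimately have "(\<Sum>j\<in>C. \<Sum>i\<in>R. B i j) + ?a3 = (\<Sum>j\<in>C. \<Sum>i\<in>R. A i j)"
        using split_sum[OF RI fin(1)] by (simp add: sum.distrib)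
      thus ?thesis by (simp add: sum.swap[of _ C R])
    qed
    have a2le: "?a2 \<le> ?b2" using Le by (intro sum_mono) auto
    have a3: "?a3 = 0" and a2: "?a2 = ?b2" using E1 E2 a2le by linarith+
    have BIRC: "B i j = 0" if "i \<in> I - R" "j \<in> C" for i j
      using a3 that fin finR by simp
    have BRJC: "B i j = A i j" if "i \<in> R" "j \<in> J - C" for i j
    proof -
      have "(\<Sum>j\<in>J - C. B i j) = (\<Sum>j\<in>J - C. A i j)"
        by (rule sum_mono_inv[OF a2 _ that(1) finR(1)]) (use Le in \<open>auto intro!: sum_mono\<close>)
      thus ?thesis by (rule sum_mono_inv) (use Le that fin in auto)
    qed
    have rem: "B i j = A i j" if "i \<in> I - R" "j \<in> J - C" for i j
    proof -
      let ?A = "res (I - R) (J - C) A" and ?B = "res (I - R) (J - C) B"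
      have lt: "card (I - R) < card I"
      proof -
        have "card (I - R) = card I - card R" using RI finR by (simp add: card_Diff_subset)
        moreover have "card R > 0" using Rne finR card_gt_0_iff by blast
        moreover have "card R \<le> card I" using RI fin card_mono by blast
        ultimately show ?thesis by linarith
      qed
      have "?B = ?A"
      proof (rule less.hyps[OF lt])
        show "finite (I - R)" "finite (J - C)" using fin by auto
        show "?A \<in> SF q (I - R) (J - C)" by (rule res_SF[OF q2 A]) auto
        show "?B \<in> mats q (I - R) (J - C)" using Bq unfolding mats_def res_def by auto
        show "\<forall>i\<in>I - R. (\<Sum>j\<in>J - C. ?B i j) = (\<Sum>j\<in>J - C. ?A i j)"
        proof
          fix i assume i: "i \<in> I - R"
          have "(\<Sum>j\<in>J. B i j) = (\<Sum>j\<in>J. A i j)" using rs i by auto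
          moreover have "(\<Sum>j\<in>C. B i j) = 0" "(\<Sum>j\<in>C. A i j) = 0" using BIRC Fc i by auto
          ultimately have "(\<Sum>j\<in>J - C. B i j) = (\<Sum>j\<in>J - C. A i j)"
            using split_sum[OF CJ fin(2), of "B i"] split_sum[OF CJ fin(2), of "A i"] by simp
          thus "(\<Sum>j\<in>J - C. ?B i j) = (\<Sum>j\<in>J - C. ?A i j)" using i unfolding res_def by simp
        qed
        show "\<forall>j\<in>J - C. (\<Sum>i\<in>I - R. ?B i j) = (\<Sum>i\<in>I - R. ?A i j)"
        proof
          fix j assume j: "j \<in> J - C"
          have "(\<Sum>i\<in>I. B i j) = (\<Sum>i\<in>I. A i j)" using cs j by auto
          moreover have "(\<Sum>i\<in>R. B i j) = (\<Sum>i\<in>R. A i j)" using BRJC j by (intro sum.cong) auto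
          ultimately have "(\<Sum>i\<in>I - R. B i j) = (\<Sum>i\<in>I - R. A i j)"
            using split_sum[OF RI fin(1), of "\<lambda>i. B i j"] split_sum[OF RI fin(1), of "\<lambda>i. A i j"] by simp
          thus "(\<Sum>i\<in>I - R. ?B i j) = (\<Sum>i\<in>I - R. ?A i j)" using j unfolding res_def by simp
        qed
      qed
      thus ?thesis using that unfolding res_def by (metis (no_types, lifting))
    qed
    have blk: "B i j = A i j" if "i \<in> R" "j \<in> C" for i j
    proof -
      let ?A = "res R C A"
      have Cne: "C \<noteq> {}" unfolding C_def by (rule CC_ne[OF q2 A fin ij0])
      have "A \<noteq> (\<lambda>_ _. 0)" using ij0 by (auto simp: fun_eq_iff)
      hence "Psi I J A \<in> DD q I J" by (rule Psi_in[OF q2 A _ fin])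
      hence "?A \<in> BL q R C" unfolding DD_def Psi_def R_def C_def by auto
      hence Ar: "?A \<in> (\<Union>i0\<in>R. RowT q R C i0) \<union> (\<Union>j0\<in>C. ColT q R C j0)"
        using BL_eq[OF q2 Rne] by simp
      have Bq': "\<And>i j. i \<in> R \<Longrightarrow> j \<in> C \<Longrightarrow> B i j < q" using Bq RI CJ by blast
      have rs': "(\<Sum>j\<in>C. B i j) = (\<Sum>j\<in>C. ?A i j)" if "i \<in> R" for i
      proof -
        have "(\<Sum>j\<in>J. B i j) = (\<Sum>j\<in>J. A i j)" using rs that RI by auto
        moreover have "(\<Sum>j\<in>J - C. B i j) = (\<Sum>j\<in>J - C. A i j)" using BRJC that by (intro sum.cong) auto
        ultimately have "(\<Sum>j\<in>C. B i j) = (\<Sum>j\<in>C. A i j)"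
          using split_sum[OF CJ fin(2), of "B i"] split_sum[OF CJ fin(2), of "A i"] by simp
        thus ?thesis using that unfolding res_def by simp
      qed
      have cs': "(\<Sum>i\<in>R. B i j) = (\<Sum>i\<in>R. ?A i j)" if "j \<in> C" for j
      proof -
        have "(\<Sum>i\<in>I. B i j) = (\<Sum>i\<in>I. A i j)" using cs that CJ by auto
        moreover have "(\<Sum>i\<in>I - R. B i j) = 0" "(\<Sum>i\<in>I - R. A i j) = 0" using BIRC Fc that by auto
        ultimately have "(\<Sum>i\<in>R. B i j) = (\<Sum>i\<in>R. A i j)"
          using split_sum[OF RI fin(1), of "\<lambda>i. B i j"] split_sum[OF RI fin(1), of "\<lambda>i. A i j"] by simp
        thus ?thesis using that unfolding res_def by simp
      qed
      from Ar have "B i j = ?A i j"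
      proof
        assume "?A \<in> (\<Union>i0\<in>R. RowT q R C i0)"
        then obtain i1 where "i1 \<in> R" "?A \<in> RowT q R C i1" by blast
        thus ?thesis using block_uniq_row[OF finR _ _ Bq' rs' cs' that] by blast
      next
        assume "?A \<in> (\<Union>j0\<in>C. ColT q R C j0)"
        then obtain j1 where "j1 \<in> C" "?A \<in> ColT q R C j1" by blast
        thus ?thesis using block_uniq_col[OF finR _ _ Bq' rs' cs' that] by blast
      qed
      thus ?thesis using that unfolding res_def by simp
    qed
    have "B i j = A i j" for i j
    proof (cases "i \<in> I \<and> j \<in> J")
      case True
      show ?thesis
      proof (cases "i \<in> R")
        case iR: True
        thus ?thesis using blk BRJC True by (cases "j \<in> C") auto
      next
        case iR: False
        thus ?thesis using rem BIRC Fc True by (cases "j \<in> C") auto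
      qed
    qed (use A0 B0 in auto)
    thus ?thesis by (simp add: fun_eq_iff)
  qed
qed

end



lemma qary_eq: "qary_matrices q m n = mats q {..<m} {..<n}"
  unfolding qary_matrices_def mats_def by auto

lemma delta_sum: "c \<in> S \<Longrightarrow> d \<in> S \<Longrightarrow> c \<noteq> d \<Longrightarrow> finite S \<Longrightarrow>
    (\<Sum>y\<in>S. (if y = c then 1 else if y = d then -1 else 0) :: int) = 0"
proof -
  assume h: "c \<in> S" "d \<in> S" "c \<noteq> d" "finite S"
  have "(\<Sum>y\<in>S. (if y = c then 1 else if y = d then -1 else 0) :: int)
      = (\<Sum>y\<in>S. (if y = c then 1 else 0) - (if y = d then 1 else 0))"
    by (rule sum.cong) (use h in auto)
  also have "\<dots> = 0" using h by (simp add: sum_subtractf)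
  finally show ?thesis .
qed

lemma switch_not_lonesum:
  assumes q2: "2 \<le> q" and A: "A \<in> mats q {..<m} {..<n}" and s: "sw q {..<m} {..<n} A"
  shows "\<not> strong_lonesum q m n A"
proof
  assume sl: "strong_lonesum q m n A"
  obtain a b c d where abcd: "a < m" "b < m" "c < n" "d < n" "a \<noteq> b" "c \<noteq> d"
    "A a c < q - 1" "A b d < q - 1" "0 < A a d" "0 < A b c" using s unfolding sw_def by auto
  define rr where "rr x = (if x = a then 1 else if x = b then -1 else 0 :: int)" for x
  define cc where "cc y = (if y = c then 1 else if y = d then -1 else 0 :: int)" for y
  define B where "B x y = nat (int (A x y) + rr x * cc y)" for x y
  have Bint: "int (B x y) = int (A x y) + rr x * cc y" for x y
    unfolding B_def rr_def cc_def using abcd by auto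
  have Aq: "\<And>x y. x < m \<Longrightarrow> y < n \<Longrightarrow> A x y < q" and A0: "\<And>x y. m \<le> x \<or> n \<le> y \<Longrightarrow> A x y = 0"
    using A unfolding mats_def by auto
  have "B \<in> qary_matrices q m n" unfolding qary_eq mats_def
  proof (intro CollectI conjI ballI allI impI)
    fix x y assume "x \<in> {..<m}" "y \<in> {..<n}"
    hence "A x y < q" using Aq by auto
    thus "B x y < q" using Bint[of x y] abcd unfolding rr_def cc_def by (auto split: if_splits)
  next
    fix x y assume h: "x \<notin> {..<m} \<or> y \<notin> {..<n}"
    hence "rr x * cc y = 0" using abcd unfolding rr_def cc_def by auto
    thus "B x y = 0" using Bint[of x y] A0[of x y] h by auto
  qed
  moreover have "\<forall>i<m. row_sum n B i = row_sum n A i"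
  proof (intro allI impI)
    fix i assume "i < m"
    have "int (row_sum n B i) = (\<Sum>j<n. int (A i j)) + rr i * (\<Sum>j<n. cc j)"
      unfolding row_sum_def by (simp add: Bint sum.distrib sum_distrib_left)
    also have "(\<Sum>j<n. cc j) = 0" unfolding cc_def by (rule delta_sum) (use abcd in auto)
    finally have "int (row_sum n B i) = int (row_sum n A i)" unfolding row_sum_def by simp
    thus "row_sum n B i = row_sum n A i" by simp
  qed
  moreover have "\<forall>j<n. col_sum m B j = col_sum m A j"
  proof (intro allI impI)
    fix j assume "j < n"
    have "int (col_sum m B j) = (\<Sum>i<m. int (A i j)) + (\<Sum>i<m. rr i) * cc j"
      unfolding col_sum_def by (simp add: Bint sum.distrib sum_distrib_right)
    also have "(\<Sum>i<m. rr i) = 0" unfolding rr_def by (rule delta_sum) (use abcd in auto)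
    finally have "int (col_sum m B j) = int (col_sum m A j)" unfolding col_sum_def by simp
    thus "col_sum m B j = col_sum m A j" by simp
  qed
  ultimately have "B = A" using sl unfolding strong_lonesum_def by blast
  moreover have "B a c \<noteq> A a c" using Bint[of a c] unfolding rr_def cc_def by auto
  ultimately show False by simp
qed

lemma lonesum_iff:
  assumes q2: "2 \<le> q"
  shows "strong_lonesum q m n A \<longleftrightarrow> A \<in> SF q {..<m} {..<n}"
proof
  assume sl: "strong_lonesum q m n A"
  hence "A \<in> mats q {..<m} {..<n}" unfolding strong_lonesum_def qary_eq by auto
  thus "A \<in> SF q {..<m} {..<n}" using switch_not_lonesum[OF q2 _ _ ] sl unfolding SF_def by auto
next
  assume A: "A \<in> SF q {..<m} {..<n}"
  show "strong_lonesum q m n A" unfolding strong_lonesum_def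
  proof (intro conjI ballI impI)
    show "A \<in> qary_matrices q m n" using A unfolding qary_eq SF_def by auto
    fix B assume B: "B \<in> qary_matrices q m n"
      and h: "(\<forall>i<m. row_sum n B i = row_sum n A i) \<and> (\<forall>j<n. col_sum m B j = col_sum m A j)"
    show "B = A"
      by (rule uniq[OF q2 _ _ A]) (use B h in \<open>auto simp: qary_eq row_sum_def col_sum_def\<close>)
  qed
qed

lemma count_eq: "2 \<le> q \<Longrightarrow> real (lonesum_count q m n) = beta q m n"
proof -
  assume q2: "2 \<le> q"
  have "{A. strong_lonesum q m n A} = SF q {..<m} {..<n}" using lonesum_iff[OF q2] by auto
  thus ?thesis using count_SF[OF q2, of "{..<m}" "{..<n}"] unfolding lonesum_count_def by simp
qed

theorem mainTheorem7:
  fixes q :: nat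
  assumes "q \<ge> 2"
  shows "lonesum_egf q = (expX 1 * expY 1) * inverse (1 - F_q q)
     \<and> F_q q = Abs_fps (\<lambda>s. Abs_fps (\<lambda>r.
          if 1 \<le> r \<and> 1 \<le> s then f_q q r s / (fact r * fact s) else 0))"
proof
  have "lonesum_egf q = Gq q"
  proof (rule fps_ext, rule fps_ext)
    fix n m
    show "fps_nth (fps_nth (lonesum_egf q) n) m = fps_nth (fps_nth (Gq q) n) m"
      using count_eq[OF assms, of m n] unfolding lonesum_egf_def beta_def by simp
  qed
  thus "lonesum_egf q = (expX 1 * expY 1) * inverse (1 - F_q q)"
    unfolding Gq_def EE_def Hq_def .
  show "F_q q = Abs_fps (\<lambda>s. Abs_fps (\<lambda>r.
          if 1 \<le> r \<and> 1 \<le> s then f_q q r s / (fact r * fact s) else 0))"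
    by (rule fps_ext, rule fps_ext) (simp add: F_nth)
qed


end
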